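(* Let $0<m\le L$, $\kappa=L/m$, let $\rho\in(0,1)$ satisfy $1/(1-\rho)\in[\sqrt{3\kappa+1}/2,(\kappa+1)/2]$, let $c\in[0,1/2]$ be the solution of $\kappa(1-\rho)\big(1-c\rho-c^2(1+\rho)\big)=(1+\rho)\big(1-c\rho-c^2(1-\rho)\big)$, and consider the two-step momentum algorithm with parameters $\alpha=(1+\rho)(1+c-c\rho)/(L(1+c))$, $\gamma=\beta=c\rho^2/\big((\alpha L-1)(1+c)\big)$. Then the extreme values of $\hat J$ over $[m,L]$ satisfy $$\hat J_{\max}=\hat J(m)=\frac{\sigma_w^2(1-c)^2(r\kappa+1)}{2(1-c-c\rho^2)(1+\rho)(1-c+c\rho)}\;\ge\;\hat J(L)=\frac{\sigma_w^2(1+c)^2(1+c-c\rho^2)}{(1-\rho^2)(1+c-c\rho)(1+c+c\rho)(1+c+c\rho^2)},$$ and $\hat J_{\min}=\hat J(1/\alpha)=\sigma_w^2$, where $r=\dfrac{(1+c)(1-c+c\rho)}{(1-c)(1+c-c\rho)}\in[1,3]$.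
   Context: For the two-step momentum algorithm $x^{t+2}=x^{t+1}+\beta(x^{t+1}-x^t)-\alpha\nabla f\big(x^{t+1}+\gamma(x^{t+1}-x^t)\big)+\sigma_w w^t$ applied to quadratics with Hessian eigenvalues in $[m,L]$ (white noise $w^t$ with zero mean and identity covariance, $\sigma_w\ge0$), define for $\lambda>0$: $a(\lambda)=\beta-\gamma\alpha\lambda$, $b(\lambda)=(1+\gamma)\alpha\lambda-(1+\beta)$, $d(\lambda)=a+b+1$, $l(\lambda)=a-b+1$, $h(\lambda)=1-a$, and $\hat J(\lambda)=\sigma_w^2(d(\lambda)+l(\lambda))/(2d(\lambda)h(\lambda)l(\lambda))$ (the contribution of Hessian eigenvalue $\lambda$ to the steady-state variance of $x^t-x^\star$). $\hat J_{\max}=\max_{\lambda\in[m,L]}\hat J(\lambda)$, $\hat J_{\min}=\min_{\lambda\in[m,L]}\hat J(\lambda)$. *)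

theory Defs
  imports Complex_Main
begin

text \<open>Coefficients of the characteristic polynomial of the two-step momentum
  algorithm with step size alpha, momentum beta, extrapolation gamma, at Hessian
  eigenvalue lam.\<close>

definition ca :: "real \<Rightarrow> real \<Rightarrow> real \<Rightarrow> real \<Rightarrow> real" where
  "ca alpha beta gamma lam = beta - gamma * alpha * lam"

definition cb :: "real \<Rightarrow> real \<Rightarrow> real \<Rightarrow> real \<Rightarrow> real" where
  "cb alpha beta gamma lam = (1 + gamma) * alpha * lam - (1 + beta)"

definition cd :: "real \<Rightarrow> real \<Rightarrow> real \<Rightarrow> real \<Rightarrow> real" where
  "cd alpha beta gamma lam = ca alpha beta gamma lam + cb alpha beta gamma lam + 1"

definition cl :: "real \<Rightarrow> real \<Rightarrow> real \<Rightarrow> real \<Rightarrow> real" where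
  "cl alpha beta gamma lam = ca alpha beta gamma lam - cb alpha beta gamma lam + 1"

definition ch :: "real \<Rightarrow> real \<Rightarrow> real \<Rightarrow> real \<Rightarrow> real" where
  "ch alpha beta gamma lam = 1 - ca alpha beta gamma lam"

text \<open>Contribution of eigenvalue lam to the steady-state variance.\<close>
definition Jhat :: "real \<Rightarrow> real \<Rightarrow> real \<Rightarrow> real \<Rightarrow> real \<Rightarrow> real" where
  "Jhat sigma_w alpha beta gamma lam =
     sigma_w\<^sup>2 * (cd alpha beta gamma lam + cl alpha beta gamma lam) /
     (2 * cd alpha beta gamma lam * ch alpha beta gamma lam * cl alpha beta gamma lam)"

definition Jhat_max :: "real \<Rightarrow> real \<Rightarrow> real \<Rightarrow> real \<Rightarrow> real \<Rightarrow> real \<Rightarrow> real" where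
  "Jhat_max sigma_w alpha beta gamma m L = (SUP lam\<in>{m..L}. Jhat sigma_w alpha beta gamma lam)"

definition Jhat_min :: "real \<Rightarrow> real \<Rightarrow> real \<Rightarrow> real \<Rightarrow> real \<Rightarrow> real \<Rightarrow> real" where
  "Jhat_min sigma_w alpha beta gamma m L = (INF lam\<in>{m..L}. Jhat sigma_w alpha beta gamma lam)"

end

theory Submission imports Defs begin
definition Gf :: "real \<Rightarrow> real \<Rightarrow> real" where
  "Gf u x = x * (1 - 2*u + u*x) * (2 - (1+u)*x) / (1 - u*x)"
definition Ef :: "real \<Rightarrow> real \<Rightarrow> real" where
  "Ef u x = 2 - 4*u + (4*u^2 + 2*u)*x - 2*u^2*(1+u)*x^2"
lemma G_deriv:
  assumes "u*x \<noteq> 1"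
  shows "(Gf u has_real_derivative ((1-x)*Ef u x/(1-u*x)^2)) (at x)"
proof -
  have ne: "1 - u*x \<noteq> 0" using assms by simp
  have D: "((\<lambda>x. x * (1 - 2*u + u*x) * (2 - (1+u)*x) / (1 - u*x)) has_real_derivative
     ((1-x)*Ef u x/(1-u*x)^2)) (at x)"
    apply (rule derivative_eq_intros refl)+
     apply (rule ne)
    apply (simp only: power2_eq_square)
    apply (rule arg_cong[where f="\<lambda>t. t/((1-u*x)*(1-u*x))"])
    apply (simp add: Ef_def power2_eq_square algebra_simps)
    done
  show ?thesis using D by (simp add: Gf_def[abs_def])
qed
lemma E_pos:
  assumes "0 \<le> u" "u < 1/2" "0 \<le> x" "x \<le> 2/(1+u)"
  shows "Ef u x > 0"
proof -
  have h1: "(1+u)*x \<le> 2" using assms by (simp add: field_simps)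
  have h: "(1+u)*x*x \<le> 2*x" using mult_right_mono[OF h1 assms(3)] .
  have h2: "u^2*((1+u)*x*x) \<le> u^2*(2*x)" by (rule mult_left_mono[OF h]) simp
  have h3: "u*x \<ge> 0" using assms by simp
  have "Ef u x = 2 - 4*u + 2*(u*x) + 4*(u^2*x) - 2*(u^2*((1+u)*x*x))"
    by (simp add: Ef_def algebra_simps power2_eq_square)
  then show ?thesis using h2 h3 assms(2) by simp
qed

lemma G_up:
  assumes "0 \<le> u" "u < 1/2" "0 \<le> y" "y \<le> x" "x \<le> 1"
  shows "Gf u y \<le> Gf u x"
proof (rule DERIV_nonneg_imp_nondecreasing[OF assms(4)])
  fix t assume t: "y \<le> t" "t \<le> x"
  have ut: "u*t \<le> u*1" using t assms by (intro mult_left_mono) auto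
  hence ne: "u*t \<noteq> 1" using assms by auto
  have "2/(1+u) \<ge> 1" using assms by (simp add: field_simps)
  hence "t \<le> 2/(1+u)" using t assms by linarith
  hence "Ef u t > 0" using t assms by (intro E_pos) auto
  moreover have "(1 - t) \<ge> 0" using t assms by simp
  ultimately have "(1-t)*Ef u t/(1-u*t)^2 \<ge> 0" by simp
  thus "\<exists>d. (Gf u has_real_derivative d) (at t) \<and> 0 \<le> d"
    using G_deriv[OF ne] by blast
qed

lemma G_down:
  assumes "0 \<le> u" "u < 1/2" "1 \<le> y" "y \<le> x" "x \<le> 2/(1+u)"
  shows "Gf u x \<le> Gf u y"
proof (rule DERIV_nonpos_imp_nonincreasing[OF assms(4)])
  fix t assume t: "y \<le> t" "t \<le> x"
  have "(1+u)*x \<le> 2" using assms by (simp add: field_simps)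
  moreover have "(1+u)*t \<le> (1+u)*x" using t assms by (intro mult_left_mono) auto
  ultimately have "(1+u)*t \<le> 2" by linarith
  moreover have "t*u \<ge> 0" using assms t by simp
  ultimately have "t \<le> 2" by (simp add: algebra_simps)
  hence "u*t \<le> u*2" using assms by (intro mult_left_mono) auto
  hence "u*t < 1" using assms by linarith
  hence ne: "u*t \<noteq> 1" by auto
  have "t \<le> 2/(1+u)" using t assms(5) by linarith
  hence "Ef u t > 0" using t assms by (intro E_pos) auto
  moreover have "(1 - t) \<le> 0" using t assms by simp
  ultimately have "(1-t)*Ef u t/(1-u*t)^2 \<le> 0"
    by (simp add: divide_nonpos_nonneg mult_nonpos_nonneg)
  thus "\<exists>d. (Gf u has_real_derivative d) (at t) \<and> d \<le> 0"
    using G_deriv[OF ne] by blast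
qed

lemma J_aux:
  fixes s v x A B C :: real
  assumes "v \<noteq> 0" "x \<noteq> 0" "A \<noteq> 0" "B \<noteq> 0" "C \<noteq> 0"
  shows "s^2*(2*C/v)/(2*x*(A/v)*(B/v)) = s^2*v/(x*A*B/C)"
  using assms by (simp add: divide_simps)

lemma J_eq:
  assumes "u \<noteq> 1" "beta = u/(1-u)" "x = alpha*lam" "x \<noteq> 0"
    "1-2*u+u*x \<noteq> 0" "2-(1+u)*x \<noteq> 0" "1-u*x \<noteq> 0"
  shows "Jhat s alpha beta beta lam = s^2*(1-u)/Gf u x"
proof -
  have u1: "1 - u \<noteq> 0" using assms by simp
  have bu: "beta * (1-u) = u" using assms(2) u1 by simp
  have d: "cd alpha beta beta lam = x" using assms(3)
    by (simp add: cd_def ca_def cb_def algebra_simps)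
  have "ch alpha beta beta lam * (1-u) = (1-u) - beta*(1-u) + (beta*(1-u))*x"
    unfolding ch_def ca_def assms(3) by (simp add: algebra_simps)
  also have "\<dots> = 1-2*u+u*x" unfolding bu by simp
  finally have h0: "ch alpha beta beta lam * (1-u) = 1-2*u+u*x" .
  have h: "ch alpha beta beta lam = (1-2*u+u*x)/(1-u)" using h0 u1 by (simp add: eq_divide_eq)
  have "cl alpha beta beta lam * (1-u) = 2*(1-u) + 2*(beta*(1-u)) - x*(1-u) - 2*(beta*(1-u))*x"
    unfolding cl_def ca_def cb_def assms(3) by (simp add: algebra_simps)
  also have "\<dots> = 2-(1+u)*x" unfolding bu by (simp add: algebra_simps)
  finally have l0: "cl alpha beta beta lam * (1-u) = 2-(1+u)*x" .
  have l: "cl alpha beta beta lam = (2-(1+u)*x)/(1-u)" using l0 u1 by (simp add: eq_divide_eq)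
  have dl: "cd alpha beta beta lam + cl alpha beta beta lam = 2*(1-u*x)/(1-u)"
    using d l u1 by (simp add: field_simps)
  show ?thesis unfolding Jhat_def dl
    unfolding d h l Gf_def using J_aux[OF u1 assms(4-7)] by simp
qed

lemma fr1: "(q::real) \<noteq> 0 \<Longrightarrow> q - u*p = N \<Longrightarrow> 1 - u*(p/q) = N/q"
  by (simp add: divide_simps)
lemma fr2: "(q::real) \<noteq> 0 \<Longrightarrow> (1-2*u)*q + u*p = N \<Longrightarrow> 1 - 2*u + u*(p/q) = N/q"
  by (simp add: divide_simps)
lemma fr3: "(q::real) \<noteq> 0 \<Longrightarrow> 2*q - (1+u)*p = N \<Longrightarrow> 2 - (1+u)*(p/q) = N/q"
  by (simp add: divide_simps)
lemma fr0: "(q::real) \<noteq> 0 \<Longrightarrow> q - p = N \<Longrightarrow> 1 - p/q = N/q"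
  by (simp add: divide_simps)
lemma fr0': "(q::real) \<noteq> 0 \<Longrightarrow> p - q = N \<Longrightarrow> p/q - 1 = N/q"
  by (simp add: divide_simps)
lemma cancel1: "(a::real) \<noteq> 0 \<Longrightarrow> (a*N)/(a*K) = N/K"
  by simp
lemma frac_le_cross: "(0::real) < B \<Longrightarrow> 0 < D \<Longrightarrow> A*D \<le> C*B \<Longrightarrow> A/B \<le> C/D"
  by (simp add: divide_simps mult.commute)

lemma G_one: "(u::real) \<noteq> 1 \<Longrightarrow> Gf u 1 = 1 - u"
proof -
  assume u: "u \<noteq> 1"
  have "1 - 2*u + u*1 = 1-u" "2 - (1+u)*1 = 1-u" "1 - u*1 = 1-u" by simp_all
  thus ?thesis using u unfolding Gf_def by simp
qed

lemma lin5: "(X::real) \<le> 1/4*(1-rho) \<Longrightarrow> Y \<le> rho/2 \<Longrightarrow> rho < 1 \<Longrightarrow> Z = 2*(1 - X - 2*Y) \<Longrightarrow> 0 \<le> Z"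
  by (simp add: algebra_simps)

lemma lin4: "(A::real) \<le> 1/4*(1+1/4*1) \<Longrightarrow> D \<le> 1/4 \<Longrightarrow> 0 \<le> C \<Longrightarrow> Q = 1 - D - A + C \<Longrightarrow> Q > 0"
  by simp

theorem lemma6:
  fixes m L rho c sigma_w :: real
  assumes hm: "0 < m" and hmL: "m \<le> L"
    and hrho: "0 < rho" "rho < 1"
    and hrho_lo: "sqrt (3 * (L / m) + 1) / 2 \<le> 1 / (1 - rho)"
    and hrho_hi: "1 / (1 - rho) \<le> (L / m + 1) / 2"
    and hc: "0 \<le> c" "c \<le> 1 / 2"
    and hc_eq: "(L / m) * (1 - rho) * (1 - c * rho - c\<^sup>2 * (1 + rho))
               = (1 + rho) * (1 - c * rho - c\<^sup>2 * (1 - rho))"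
    and hsig: "0 \<le> sigma_w"
  defines "alpha \<equiv> (1 + rho) * (1 + c - c * rho) / (L * (1 + c))"
  defines "beta \<equiv> c * rho\<^sup>2 / ((alpha * L - 1) * (1 + c))"
  defines "gamma \<equiv> beta"
  defines "r \<equiv> (1 + c) * (1 - c + c * rho) / ((1 - c) * (1 + c - c * rho))"
  shows "(\<forall>lam\<in>{m..L}. Jhat sigma_w alpha beta gamma lam \<le> Jhat sigma_w alpha beta gamma m)
    \<and> Jhat_max sigma_w alpha beta gamma m L = Jhat sigma_w alpha beta gamma m
    \<and> Jhat sigma_w alpha beta gamma m =
        sigma_w\<^sup>2 * (1 - c)\<^sup>2 * (r * (L / m) + 1) /
        (2 * (1 - c - c * rho\<^sup>2) * (1 + rho) * (1 - c + c * rho))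
    \<and> Jhat sigma_w alpha beta gamma L \<le> Jhat sigma_w alpha beta gamma m
    \<and> Jhat sigma_w alpha beta gamma L =
        sigma_w\<^sup>2 * (1 + c)\<^sup>2 * (1 + c - c * rho\<^sup>2) /
        ((1 - rho\<^sup>2) * (1 + c - c * rho) * (1 + c + c * rho) * (1 + c + c * rho\<^sup>2))
    \<and> 1 / alpha \<in> {m..L}
    \<and> (\<forall>lam\<in>{m..L}. Jhat sigma_w alpha beta gamma (1 / alpha) \<le> Jhat sigma_w alpha beta gamma lam)
    \<and> Jhat_min sigma_w alpha beta gamma m L = Jhat sigma_w alpha beta gamma (1 / alpha)
    \<and> Jhat sigma_w alpha beta gamma (1 / alpha) = sigma_w\<^sup>2
    \<and> 1 \<le> r \<and> r \<le> 3"
proof -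
  define u where "u = c*rho"
  define K1 where "K1 = 1 - c*rho - c^2*(1-rho)"
  define K2 where "K2 = 1 - c*rho - c^2*(1+rho)"
  define Q where "Q = 1 - c^2 - c^2*rho^2 - c^4*rho^2 + c^4*rho^4"
  have L0: "L > 0" using hm hmL by linarith
  have cc: "c*c \<le> (1/2)*(1/2)" using hc by (intro mult_mono) auto
  have c2: "c^2 \<le> 1/4" using cc by (simp add: power2_eq_square)
  have u0: "0 \<le> u" using hc hrho by (simp add: u_def)
  have "c*rho \<le> (1/2)*rho" using hc hrho by (intro mult_right_mono) auto
  hence urho: "u \<le> rho/2" by (simp add: u_def)
  have uh: "u < 1/2" using urho hrho by linarith
  have "rho*rho \<le> rho*1" using hrho by (intro mult_left_mono) auto
  hence "rho*rho < 1" using hrho by linarith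
  hence rr: "rho^2 < 1" by (simp add: power2_eq_square)
  have rr0: "rho^2 \<ge> 0" by simp
  have crr: "c*rho^2 \<le> c*1" using hc rr by (intro mult_left_mono) auto
  have cr: "c*rho \<le> c*1" using hc hrho by (intro mult_left_mono) auto
  have crr0: "c*rho^2 \<ge> 0" using hc by simp
  have cr0: "c*rho \<ge> 0" using hc hrho by simp
  have "c^2*(1+rho) \<le> (1/4)*(1+rho)" using c2 hrho by (intro mult_right_mono) auto
  moreover have "K2 = 1 - u - c^2*(1+rho)" by (simp add: K2_def u_def algebra_simps)
  ultimately have K2p: "K2 > 0" using urho hrho by (simp add: algebra_simps)
  have "K1 = K2 + 2*(c^2*rho)" by (simp add: K1_def K2_def algebra_simps)
  moreover have "c^2*rho \<ge> 0" using hrho by simp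
  ultimately have K1p: "K1 > 0" using K2p by linarith
  have "c*(1+rho^2) \<le> (1/2)*(1+rho^2)" using hc by (intro mult_right_mono) auto
  hence p4: "1 - c - c*rho^2 > 0" using rr by (simp add: algebra_simps)
  have p1: "1 + c - c*rho > 0" using cr hc by linarith
  have p2: "1 - c + c*rho > 0" using cr0 hc by linarith
  have p3: "1 - c*rho > 0" using u0 uh by (simp add: u_def)
  have p5: "1 + c + c*rho^2 > 0" using crr0 hc by linarith
  have p6: "1 + c - c*rho^2 > 0" using crr hc by linarith
  have p7: "1 - c + c*rho^2 > 0" using crr0 hc by linarith
  have p8: "1 + c + c*rho > 0" using cr0 hc by linarith
  have p9: "1 + c > 0" "1 - c > 0" "1 - rho > 0" "1 + rho > 0" "1 - rho^2 > 0" using hc hrho rr by auto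
  have "c^2*(rho^2 + c^2*rho^2) \<le> (1/4)*(1 + 1/4*1)"
    using c2 rr by (intro mult_mono add_mono) auto
  moreover have "Q = 1 - c^2 - c^2*(rho^2 + c^2*rho^2) + c^4*rho^4"
    unfolding Q_def by (simp add: ring_distribs power_add[symmetric] mult.assoc[symmetric])
  moreover have "c^4*rho^4 \<ge> 0" by simp
  ultimately have Qp: "Q > 0" using c2 by (intro lin4[of "c^2*(rho^2 + c^2*rho^2)" "c^2" "c^4*rho^4"]) auto
  have e1: "L/m*((1-rho)*K2) = (1+rho)*K1" using hc_eq unfolding K1_def K2_def by (simp only: mult.assoc)
  have "L*((1-rho)*K2) = m*(L/m*((1-rho)*K2))" using hm by simp
  also have "\<dots> = m*((1+rho)*K1)" by (simp only: e1)
  finally have hL: "L*((1-rho)*K2) = m*((1+rho)*K1)" .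
  have kap: "L/m = (1+rho)*K1/((1-rho)*K2)" using e1 K2p p9 by (simp add: eq_divide_eq)
  have "m = L*((1-rho)*K2)/((1+rho)*K1)" using hL K1p p9 by (simp add: eq_divide_eq)
  hence mdef: "m = L*(1-rho)*K2/((1+rho)*K1)" by (simp add: mult.assoc)
  define xL where "xL = (1+rho)*(1+c-c*rho)/(1+c)"
  define xm where "xm = (1+c-c*rho)*(1-rho)*K2/((1+c)*K1)"
  have "alpha*L = (L*((1+rho)*(1+c-c*rho)))/(L*(1+c))" unfolding alpha_def by (simp add: ac_simps)
  also have "\<dots> = xL" unfolding xL_def using L0 by (intro mult_divide_mult_cancel_left) simp
  finally have axL: "alpha*L = xL" .
  have "alpha*m = (1+rho)*(1+c-c*rho)/(L*(1+c)) * (L*(1-rho)*K2/((1+rho)*K1))"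
    using mdef alpha_def by simp
  also have "\<dots> = xm" unfolding xm_def using L0 p9 K1p by (simp add: divide_simps)
  finally have axm: "alpha*m = xm" .
  have aL1: "alpha*L - 1 = rho*(1-c*rho)/(1+c)" unfolding axL xL_def using p9
    by (simp add: divide_simps algebra_simps)
  have "(alpha*L-1)*(1+c) = rho*(1-c*rho)" using aL1 p9 by simp
  hence "beta = (rho*(c*rho))/(rho*(1-c*rho))" unfolding beta_def by (simp add: power2_eq_square ac_simps)
  also have "\<dots> = u/(1-u)" unfolding u_def using hrho by (intro mult_divide_mult_cancel_left) simp
  finally have bet: "beta = u/(1-u)" .
  have apos: "alpha > 0" using L0 p9 p1 by (simp add: alpha_def)
  have gb: "gamma = beta" using gamma_def by simp
  have q1: "1 + c \<noteq> 0" "K1 \<noteq> 0" "(1+c)*K1 \<noteq> 0" using p9 K1p by auto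
  have F1: "1 - u*xL = (1-c*rho)*(1+c-c*rho^2)/(1+c)" unfolding xL_def
    by (rule fr1[OF q1(1)]) (simp add: u_def algebra_simps power2_eq_square)
  have F2: "1 - 2*u + u*xL = (1-c*rho)*(1+c+c*rho^2)/(1+c)" unfolding xL_def
    by (rule fr2[OF q1(1)]) (simp add: u_def algebra_simps power2_eq_square)
  have F3: "2 - (1+u)*xL = (1-rho)*(1-c*rho)*(1+c+c*rho)/(1+c)" unfolding xL_def
    by (rule fr3[OF q1(1)]) (simp add: u_def algebra_simps power2_eq_square)
  have F0: "xL - 1 = rho*(1-c*rho)/(1+c)" unfolding xL_def
    by (rule fr0'[OF q1(1)]) (simp add: algebra_simps)
  have "1 - u*xm = ((1+c)*((1+c-c*rho)*(1-c*rho)*(1-c+c*rho^2)))/((1+c)*K1)" unfolding xm_def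
    by (rule fr1[OF q1(3)]) (simp add: u_def K1_def K2_def algebra_simps power2_eq_square)
  hence M1: "1 - u*xm = (1+c-c*rho)*(1-c*rho)*(1-c+c*rho^2)/K1" using q1 by simp
  have "1 - 2*u + u*xm = ((1+c)*((1+c-c*rho)*(1-c*rho)*(1-c-c*rho^2)))/((1+c)*K1)" unfolding xm_def
    by (rule fr2[OF q1(3)]) (simp add: u_def K1_def K2_def algebra_simps power2_eq_square)
  hence M2: "1 - 2*u + u*xm = (1+c-c*rho)*(1-c*rho)*(1-c-c*rho^2)/K1" using q1 by simp
  have "2 - (1+u)*xm = ((1+c)*((1+rho)*(1+c-c*rho)*(1-c+c*rho)*(1-c*rho)))/((1+c)*K1)" unfolding xm_def
    by (rule fr3[OF q1(3)]) (simp add: u_def K1_def K2_def algebra_simps power2_eq_square)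
  hence M3: "2 - (1+u)*xm = (1+rho)*(1+c-c*rho)*(1-c+c*rho)*(1-c*rho)/K1" using q1 by simp
  have "1 - xm = ((1+c)*(rho*(1+c-c*rho)*(1-c*rho)))/((1+c)*K1)" unfolding xm_def
    by (rule fr0[OF q1(3)]) (simp add: u_def K1_def K2_def algebra_simps power2_eq_square)
  hence M0: "1 - xm = rho*(1+c-c*rho)*(1-c*rho)/K1" using q1 by simp
  have xmp: "xm > 0" unfolding xm_def using p1 p9 K1p K2p by simp
  have "0 \<le> rho*(1+c-c*rho)*(1-c*rho)/K1" using hrho p1 p3 K1p by simp
  hence xm1: "xm \<le> 1" using M0 by linarith
  have "0 \<le> rho*(1-c*rho)/(1+c)" using hrho p3 p9 by simp
  hence xL1: "1 \<le> xL" using F0 by linarith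
  have F3p: "2 - (1+u)*xL > 0" unfolding F3 using p9 p3 p8 by simp
  hence xL2: "xL \<le> 2/(1+u)" using u0 by (simp add: le_divide_eq algebra_simps)
  have pos: "0 < x \<and> 0 < 1-2*u+u*x \<and> 0 < 2-(1+u)*x \<and> 0 < 1-u*x" if x: "xm \<le> x" "x \<le> xL" for x
  proof -
    have x0: "0 < x" using x xmp by linarith
    have "u*x \<ge> 0" using u0 x0 by simp
    hence a: "0 < 1-2*u+u*x" using uh by linarith
    have "(1+u)*x \<le> (1+u)*xL" using x u0 by (intro mult_left_mono) auto
    hence b: "0 < 2-(1+u)*x" using F3p by linarith
    have "x \<le> (1+u)*x" using x0 u0 by (simp add: algebra_simps)
    hence x2: "x < 2" using b by linarith
    have "u*x \<le> (1/2)*x" using uh x0 by (intro mult_right_mono) auto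
    hence c: "0 < 1 - u*x" using x2 by linarith
    show ?thesis using x0 a b c by simp
  qed
  have Gpos: "Gf u x > 0" if "xm \<le> x" "x \<le> xL" for x
    using pos[OF that] by (simp add: Gf_def)
  have ax: "xm \<le> alpha*lam \<and> alpha*lam \<le> xL" if "m \<le> lam" "lam \<le> L" for lam
  proof -
    have "alpha*m \<le> alpha*lam" "alpha*lam \<le> alpha*L" using that apos by (auto intro: mult_left_mono)
    thus ?thesis using axm axL by simp
  qed
  have Jx: "Jhat sigma_w alpha beta gamma lam = sigma_w^2*(1-u)/Gf u (alpha*lam)"
    if "m \<le> lam" "lam \<le> L" for lam
  proof -
    have "xm \<le> alpha*lam" "alpha*lam \<le> xL" using ax[OF that] by auto
    note pp = pos[OF this]
    show ?thesis unfolding gb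
      by (rule J_eq) (use uh bet pp in auto)
  qed
  define WL where "WL = (1+c)^2*(1+c-c*rho^2)/((1-rho^2)*(1+c-c*rho)*(1+c+c*rho)*(1+c+c*rho^2))"
  define Wm where "Wm = (1+c)*(1-c+c*rho^2)*K1^2/((1-rho^2)*K2*(1+c-c*rho)^2*(1-c-c*rho^2)*(1-c+c*rho))"
  have nz: "1 - c*rho \<noteq> 0" "1 + c - c*rho \<noteq> 0" "1 - c + c*rho \<noteq> 0" "1 - c - c*rho^2 \<noteq> 0"
    "1 + c + c*rho^2 \<noteq> 0" "1 + c - c*rho^2 \<noteq> 0" "1 - c + c*rho^2 \<noteq> 0" "1 + c + c*rho \<noteq> 0"
    "1 + c \<noteq> 0" "1 - c \<noteq> 0" "1 - rho \<noteq> 0" "1 + rho \<noteq> 0" "1 - rho^2 \<noteq> 0" "K1 \<noteq> 0" "K2 \<noteq> 0"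
    using p1 p2 p3 p4 p5 p6 p7 p8 p9 K1p K2p by auto
  have nz2: "c * 2 + c * (rho * (rho * 2)) \<noteq> 2" using p4 by (auto simp: algebra_simps power2_eq_square)
  have WLe: "(1-u)/Gf u xL = WL"
    unfolding Gf_def F1 F2 F3 unfolding WL_def xL_def u_def using nz
    by (simp add: divide_simps) (simp add: algebra_simps power2_eq_square)
  have Wme: "(1-u)/Gf u xm = Wm"
    unfolding Gf_def M1 M2 M3 unfolding Wm_def xm_def u_def using nz
    by (simp add: divide_simps) (simp add: algebra_simps power2_eq_square)
  define N1 where "N1 = (1+c)*(1-c+c*rho)*(1+rho)*K1 + (1-c)*(1+c-c*rho)*(1-rho)*K2"
  define D1 where "D1 = (1-c)*(1+c-c*rho)*(1-rho)*K2"
  have rk: "r*(L/m)+1 = N1/D1" unfolding r_def kap N1_def D1_def using nz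
    by (simp add: divide_simps)
  have red: "2*(1+c)*(1-c+c*rho^2)*K1^2 = (1-c)*(1+c-c*rho)*N1"
    unfolding N1_def K1_def K2_def by (simp add: algebra_simps power2_eq_square)
  have Wm2: "Wm = (1-c)^2*(r*(L/m)+1)/(2*(1-c-c*rho^2)*(1+rho)*(1-c+c*rho))"
  proof -
    define P4 where "P4 = 1 - c - c*rho^2"
    have P4nz: "P4 \<noteq> 0" using p4 P4_def by simp
    have WmP: "Wm = (1+c)*(1-c+c*rho^2)*K1^2/((1-rho^2)*K2*(1+c-c*rho)^2*P4*(1-c+c*rho))"
      unfolding Wm_def P4_def ..
    have "Wm = (2*(1+c)*(1-c+c*rho^2)*K1^2) * ((1-c)*(1+c-c*rho)*(1-rho)*K2*P4*(1+rho)*(1-c+c*rho))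
       / ((1-rho^2)*K2*(1+c-c*rho)^2*P4*(1-c+c*rho) * (D1*(2*P4*(1+rho)*(1-c+c*rho))))"
      unfolding WmP D1_def using nz P4nz by (simp add: divide_simps) (simp add: algebra_simps power2_eq_square)
    also have "\<dots> = ((1-c)*(1+c-c*rho)*N1) * ((1-c)*(1+c-c*rho)*(1-rho)*K2*P4*(1+rho)*(1-c+c*rho))
       / ((1-rho^2)*K2*(1+c-c*rho)^2*P4*(1-c+c*rho) * (D1*(2*P4*(1+rho)*(1-c+c*rho))))"
      unfolding red ..
    also have "\<dots> = (1-c)^2*(N1/D1)/(2*P4*(1+rho)*(1-c+c*rho))"
      unfolding D1_def using nz P4nz by (simp add: divide_simps) (simp add: algebra_simps power2_eq_square)
    finally show ?thesis unfolding rk P4_def .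
  qed
  have WLm: "WL \<le> Wm" unfolding WL_def Wm_def
  proof (rule frac_le_cross)
    show "0 < (1-rho^2)*(1+c-c*rho)*(1+c+c*rho)*(1+c+c*rho^2)" using p1 p8 p5 p9 by simp
    show "0 < (1-rho^2)*K2*(1+c-c*rho)^2*(1-c-c*rho^2)*(1-c+c*rho)" using p9 K2p p1 p4 p2 by simp
    have ident: "((1+c)*(1-c+c*rho^2)*K1^2)*((1-rho^2)*(1+c-c*rho)*(1+c+c*rho)*(1+c+c*rho^2))
       - ((1+c)^2*(1+c-c*rho^2))*((1-rho^2)*K2*(1+c-c*rho)^2*(1-c-c*rho^2)*(1-c+c*rho))
       = 4*c*rho^2*(1+c)*(1-rho^2)*(1+c-c*rho)^2*Q"
      unfolding K1_def K2_def Q_def by algebra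
    have "0 \<le> 4*c*rho^2*(1+c)*(1-rho^2)*(1+c-c*rho)^2*Q" using hc p9 Qp by simp
    thus "(1+c)^2*(1+c-c*rho^2) * ((1-rho^2)*K2*(1+c-c*rho)^2*(1-c-c*rho^2)*(1-c+c*rho))
      \<le> (1+c)*(1-c+c*rho^2)*K1^2 * ((1-rho^2)*(1+c-c*rho)*(1+c+c*rho)*(1+c+c*rho^2))"
      using ident by linarith
  qed
  have Jform: "Jhat sigma_w alpha beta gamma lam = sigma_w^2 * ((1-u)/Gf u (alpha*lam))"
    if "m \<le> lam" "lam \<le> L" for lam
    using Jx[OF that] by simp
  have Jm: "Jhat sigma_w alpha beta gamma m = sigma_w^2 * Wm"
    using Jform[of m] hmL axm Wme by simp
  have JL: "Jhat sigma_w alpha beta gamma L = sigma_w^2 * WL"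
    using Jform[of L] hmL axL WLe by simp
  have s2: "0 \<le> sigma_w^2" by simp
  have u1: "0 \<le> 1 - u" "1 - u > 0" using uh by auto
  have W_le: "(1-u)/Gf u (alpha*lam) \<le> Wm" if "m \<le> lam" "lam \<le> L" for lam
  proof -
    define x where "x = alpha*lam"
    have x: "xm \<le> x" "x \<le> xL" using ax[OF that] x_def by auto
    have Gx: "Gf u x > 0" using Gpos[OF x] .
    have Gm: "Gf u xm > 0" using Gpos[of xm] x by simp
    have GL: "Gf u xL > 0" using Gpos[of xL] x by simp
    show ?thesis
    proof (cases "x \<le> 1")
      case True
      have "Gf u xm \<le> Gf u x" using G_up[OF u0 uh _ x(1) True] xmp by simp
      hence "(1-u)/Gf u x \<le> (1-u)/Gf u xm" using Gx Gm u1 by (intro divide_left_mono) auto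
      thus ?thesis using Wme x_def by simp
    next
      case False
      have "Gf u xL \<le> Gf u x" using G_down[OF u0 uh _ x(2) xL2] False by simp
      hence "(1-u)/Gf u x \<le> (1-u)/Gf u xL" using Gx GL u1 by (intro divide_left_mono) auto
      thus ?thesis using WLe WLm x_def by simp
    qed
  qed
  have W_ge: "1 \<le> (1-u)/Gf u (alpha*lam)" if "m \<le> lam" "lam \<le> L" for lam
  proof -
    define x where "x = alpha*lam"
    have x: "xm \<le> x" "x \<le> xL" using ax[OF that] x_def by auto
    have Gx: "Gf u x > 0" using Gpos[OF x] .
    have G1: "Gf u 1 = 1 - u" using uh by (intro G_one) simp
    have "Gf u x \<le> Gf u 1"
    proof (cases "x \<le> 1")
      case True
      thus ?thesis using G_up[OF u0 uh _ True] x xmp by simp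
    next
      case False
      thus ?thesis using G_down[OF u0 uh _ _ xL2, of 1] x xL2 G_down[OF u0 uh, of 1 x] by simp
    qed
    hence "(1-u)/Gf u 1 \<le> (1-u)/Gf u x" using Gx G1 u1 by (intro divide_left_mono) auto
    thus ?thesis using G1 u1 x_def by simp
  qed
  have inv1: "m \<le> 1/alpha" using axm xm1 apos by (simp add: le_divide_eq mult.commute)
  have inv2: "1/alpha \<le> L" using axL xL1 apos by (simp add: divide_le_eq mult.commute)
  have Jone: "Jhat sigma_w alpha beta gamma (1/alpha) = sigma_w^2"
  proof -
    have "Jhat sigma_w alpha beta gamma (1/alpha) = sigma_w^2 * ((1-u)/Gf u (alpha*(1/alpha)))"
      using Jform[OF inv1 inv2] .
    also have "alpha*(1/alpha) = 1" using apos by simp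
    also have "Gf u 1 = 1 - u" using uh by (intro G_one) simp
    finally show ?thesis using u1 by simp
  qed
  have upper: "\<forall>lam\<in>{m..L}. Jhat sigma_w alpha beta gamma lam \<le> Jhat sigma_w alpha beta gamma m"
  proof
    fix lam assume "lam \<in> {m..L}"
    hence l: "m \<le> lam" "lam \<le> L" by auto
    show "Jhat sigma_w alpha beta gamma lam \<le> Jhat sigma_w alpha beta gamma m"
      unfolding Jform[OF l] Jm using W_le[OF l] s2 by (rule mult_left_mono)
  qed
  have lower: "\<forall>lam\<in>{m..L}. Jhat sigma_w alpha beta gamma (1/alpha) \<le> Jhat sigma_w alpha beta gamma lam"
  proof
    fix lam assume "lam \<in> {m..L}"
    hence l: "m \<le> lam" "lam \<le> L" by auto
    have "sigma_w^2 * 1 \<le> sigma_w^2 * ((1-u)/Gf u (alpha*lam))"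
      using W_ge[OF l] s2 by (rule mult_left_mono)
    thus "Jhat sigma_w alpha beta gamma (1/alpha) \<le> Jhat sigma_w alpha beta gamma lam"
      unfolding Jform[OF l] Jone by simp
  qed
  have Jmax: "Jhat_max sigma_w alpha beta gamma m L = Jhat sigma_w alpha beta gamma m"
    unfolding Jhat_max_def
    by (rule cSup_eq_maximum) (use upper hmL in auto)
  have Jmin: "Jhat_min sigma_w alpha beta gamma m L = Jhat sigma_w alpha beta gamma (1/alpha)"
    unfolding Jhat_min_def
    by (rule cInf_eq_minimum) (use lower inv1 inv2 in auto)
  have JmF: "Jhat sigma_w alpha beta gamma m =
        sigma_w^2 * (1 - c)^2 * (r * (L / m) + 1) /
        (2 * (1 - c - c * rho^2) * (1 + rho) * (1 - c + c * rho))"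
    unfolding Jm Wm2 by simp
  have JLF: "Jhat sigma_w alpha beta gamma L =
        sigma_w^2 * (1 + c)^2 * (1 + c - c * rho^2) /
        ((1 - rho^2) * (1 + c - c * rho) * (1 + c + c * rho) * (1 + c + c * rho^2))"
    unfolding JL WL_def by simp
  have JLm: "Jhat sigma_w alpha beta gamma L \<le> Jhat sigma_w alpha beta gamma m"
    unfolding JL Jm using WLm s2 by (rule mult_left_mono)
  have r1: "1 \<le> r"
  proof -
    have "(1+c)*(1-c+c*rho) - (1-c)*(1+c-c*rho) = 2*(c*rho)" by (simp add: algebra_simps)
    hence "(1-c)*(1+c-c*rho) \<le> (1+c)*(1-c+c*rho)" using cr0 by linarith
    thus ?thesis unfolding r_def using p9 p1 by (simp add: le_divide_eq)
  qed
  have r3: "r \<le> 3"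
  proof -
    have "c^2*(1-rho) \<le> 1/4*(1-rho)" using c2 p9 by (intro mult_right_mono) auto
    hence "0 \<le> 3*((1-c)*(1+c-c*rho)) - (1+c)*(1-c+c*rho)"
      using urho hrho by (intro lin5[of "c^2*(1-rho)" rho "c*rho"]) (auto simp: u_def algebra_simps power2_eq_square)
    hence "(1+c)*(1-c+c*rho) \<le> 3*((1-c)*(1+c-c*rho))" by linarith
    thus ?thesis unfolding r_def using p9 p1 by (simp add: divide_le_eq)
  qed
  show ?thesis
    using upper Jmax JmF JLm JLF inv1 inv2 lower Jmin Jone r1 r3 by simp
qed

end
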